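(* Let $G$ be a triangle-free graph with $n$ vertices and $e$ edges, and let $P$ be a greedy partition of $G$ of size $r=r(P)$ (equivalently, the size-$2$ cliques of $P$ form a maximal matching of $G$ with $n-r$ edges). Then $e\le r(n-r)$.
   Context: A good partition $P$ of $V(G)$ is a partition of $V(G)$ into disjoint sets $C_1, \dots, C_r$, each inducing a complete subgraph of $G$, indexed so that $|C_1|\le\dots\le |C_r|$; its size is $r(P)=r$. It is a greedy partition if for every $i\ge1$ the set $C_1\cup\dots\cup C_i$ induces a subgraph with no complete subgraph on $|C_i|+1$ vertices. For triangle-free $G$ the cliques have size $1$ or $2$. *)

theory Defs
  imports Main
begin

definition simple_graph :: "'a set \<Rightarrow> ('a \<Rightarrow> 'a \<Rightarrow> bool) \<Rightarrow> bool" where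
  "simple_graph V E \<longleftrightarrow> finite V \<and> (\<forall>u v. E u v \<longrightarrow> E v u)
     \<and> (\<forall>v. \<not> E v v) \<and> (\<forall>u v. E u v \<longrightarrow> u \<in> V \<and> v \<in> V)"

definition edges :: "'a set \<Rightarrow> ('a \<Rightarrow> 'a \<Rightarrow> bool) \<Rightarrow> 'a set set" where
  "edges V E = {{u, v} | u v. u \<in> V \<and> v \<in> V \<and> E u v}"

definition is_clique :: "('a \<Rightarrow> 'a \<Rightarrow> bool) \<Rightarrow> 'a set \<Rightarrow> bool" where
  "is_clique E K \<longleftrightarrow> (\<forall>u\<in>K. \<forall>v\<in>K. u \<noteq> v \<longrightarrow> E u v)"

definition triangle_free :: "'a set \<Rightarrow> ('a \<Rightarrow> 'a \<Rightarrow> bool) \<Rightarrow> bool" where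
  "triangle_free V E \<longleftrightarrow> \<not> (\<exists>K \<subseteq> V. card K = 3 \<and> is_clique E K)"

definition good_partition :: "'a set \<Rightarrow> ('a \<Rightarrow> 'a \<Rightarrow> bool) \<Rightarrow> 'a set list \<Rightarrow> bool" where
  "good_partition V E P \<longleftrightarrow>
     (\<forall>C\<in>set P. C \<noteq> {} \<and> is_clique E C)
     \<and> \<Union>(set P) = V
     \<and> (\<forall>i<length P. \<forall>j<length P. i \<noteq> j \<longrightarrow> P!i \<inter> P!j = {})
     \<and> sorted (map card P)"

definition greedy_partition :: "'a set \<Rightarrow> ('a \<Rightarrow> 'a \<Rightarrow> bool) \<Rightarrow> 'a set list \<Rightarrow> bool" where
  "greedy_partition V E P \<longleftrightarrow> good_partition V E P \<and>
     (\<forall>i<length P. \<not> (\<exists>K \<subseteq> \<Union>(set (take (Suc i) P)).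
                        card K = card (P!i) + 1 \<and> is_clique E K))"

end

theory Submission imports Defs begin

lemma edges_step:
  assumes fin: "finite W" and sym: "\<And>u v. E u v \<Longrightarrow> E v u"
    and tri: "\<And>x y z. E x y \<Longrightarrow> E y z \<Longrightarrow> \<not> E x z" and eab: "E a b"
  shows "card (edges (insert a (insert b W)) E) \<le> card (edges W E) + 1 + card W"
proof -
  have irr: "\<And>v. \<not> E v v"
  proof
    fix v assume "E v v" with tri[of v v v] show False by blast
  qed
  define Na where "Na = {x\<in>W. E a x}"
  define Nb where "Nb = {x\<in>W. E b x}"
  have sub: "edges (insert a (insert b W)) E \<subseteq>
     edges W E \<union> {{a,b}} \<union> ((\<lambda>x. {a,x}) ` Na \<union> (\<lambda>x. {b,x}) ` Nb)"
  proof
    fix e assume "e \<in> edges (insert a (insert b W)) E"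
    then obtain u v where e: "e = {u,v}" "u \<in> insert a (insert b W)" "v \<in> insert a (insert b W)" "E u v"
      unfolding edges_def by blast
    have evu: "E v u" using sym e(4) .
    have uv: "u \<noteq> v"
    proof assume "u = v" with e(4) irr show False by simp qed
    show "e \<in> edges W E \<union> {{a,b}} \<union> ((\<lambda>x. {a,x}) ` Na \<union> (\<lambda>x. {b,x}) ` Nb)"
    proof (cases "u \<in> W \<and> v \<in> W")
      case True then show ?thesis unfolding edges_def using e by blast
    next
      case False
      then consider "u = a" | "u = b" | "v = a" | "v = b" using e(2,3) by blast
      then show ?thesis
      proof cases
        case 1 then show ?thesis using e uv unfolding Na_def by (cases "v = b") (simp, blast)
      next
        case 2 then show ?thesis using e uv unfolding Nb_def by (cases "v = a") (simp add: insert_commute, blast)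
      next
        case 3 then show ?thesis using e evu uv unfolding Na_def by (cases "u = b") (simp add: insert_commute, blast)
      next
        case 4 then show ?thesis using e evu uv unfolding Nb_def by (cases "u = a") (simp, blast)
      qed
    qed
  qed
  have fe: "finite (edges W E)"
  proof -
    have "edges W E \<subseteq> Pow W" unfolding edges_def by auto
    then show ?thesis using fin finite_subset by blast
  qed
  have finN: "finite Na" "finite Nb" using fin unfolding Na_def Nb_def by auto
  have "card (edges (insert a (insert b W)) E) \<le>
     card (edges W E \<union> {{a,b}} \<union> ((\<lambda>x. {a,x}) ` Na \<union> (\<lambda>x. {b,x}) ` Nb))"
    by (rule card_mono) (use fe finN sub in auto)
  also have "\<dots> \<le> card (edges W E \<union> {{a,b}}) + card ((\<lambda>x. {a,x}) ` Na \<union> (\<lambda>x. {b,x}) ` Nb)"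
    by (rule card_Un_le)
  also have "\<dots> \<le> card (edges W E) + 1 + (card Na + card Nb)"
  proof -
    have "card (edges W E \<union> {{a,b}}) \<le> card (edges W E) + 1"
      using card_Un_le[of "edges W E" "{{a,b}}"] by simp
    moreover have "card ((\<lambda>x. {a,x}) ` Na \<union> (\<lambda>x. {b,x}) ` Nb) \<le> card Na + card Nb"
      by (meson add_mono card_Un_le card_image_le finN order_trans)
    ultimately show ?thesis by linarith
  qed
  also have "card Na + card Nb = card (Na \<union> Nb)"
  proof -
    have "Na \<inter> Nb = {}" unfolding Na_def Nb_def
      using tri[of a _ b] sym eab by blast
    then show ?thesis using card_Un_disjoint[OF finN] by simp
  qed
  also have "card (Na \<union> Nb) \<le> card W"
    by (rule card_mono) (auto simp: fin Na_def Nb_def)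
  finally show ?thesis by simp
qed

lemma main_count:
  assumes "finite Q"
  shows "\<lbrakk> \<And>u v. E u v \<Longrightarrow> E v u; \<And>x y z. E x y \<Longrightarrow> E y z \<Longrightarrow> \<not> E x z;
     \<forall>p\<in>Q. \<exists>a b. p = {a,b} \<and> E a b; \<forall>p\<in>Q. \<forall>q\<in>Q. p \<noteq> q \<longrightarrow> p \<inter> q = {};
     finite S; S \<inter> \<Union>Q = {}; \<forall>u\<in>S. \<forall>v\<in>S. \<not> E u v \<rbrakk>
    \<Longrightarrow> card (edges (S \<union> \<Union>Q) E) \<le> card Q * (card Q + card S)"
  using assms
proof (induction Q rule: finite_induct)
  case empty
  have "edges S E = {}" using empty.prems(7) unfolding edges_def by auto
  then show ?case by simp
next
  case (insert p Q)
  have "\<exists>a b. p = {a,b} \<and> E a b" using insert.prems(3) by simp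
  then obtain a b where p: "p = {a,b}" "E a b" by blast
  have IH: "card (edges (S \<union> \<Union>Q) E) \<le> card Q * (card Q + card S)"
  proof (rule insert.IH)
    show "\<forall>p\<in>Q. \<exists>a b. p = {a,b} \<and> E a b" using insert.prems(3) by simp
    show "\<forall>p\<in>Q. \<forall>q\<in>Q. p \<noteq> q \<longrightarrow> p \<inter> q = {}" using insert.prems(4) by simp
    show "S \<inter> \<Union>Q = {}" using insert.prems(6) by auto
    show "\<And>u v. E u v \<Longrightarrow> E v u" by (rule insert.prems(1))
    show "\<And>x y z. E x y \<Longrightarrow> E y z \<Longrightarrow> \<not> E x z" by (rule insert.prems(2))
    show "finite S" by (rule insert.prems(5))
    show "\<forall>u\<in>S. \<forall>v\<in>S. \<not> E u v" by (rule insert.prems(7))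
  qed
  have disj: "\<forall>q\<in>Q. p \<inter> q = {}" using insert.prems(4) insert.hyps(2) by auto
  have fQ: "finite (\<Union>Q)" using insert.hyps(1) insert.prems(3) by auto
  have cU: "card (\<Union>Q) \<le> 2 * card Q"
  proof -
    have "card (\<Union>Q) \<le> sum card Q" by (rule card_Union_le_sum_card)
    also have "\<dots> \<le> sum (\<lambda>_. 2) Q"
    proof (rule sum_mono)
      fix q assume "q \<in> Q"
      then obtain x y where "q = {x,y}" using insert.prems(3) by blast
      then show "card q \<le> 2" by (simp add: card_insert_if)
    qed
    finally show ?thesis by simp
  qed
  have cW: "card (S \<union> \<Union>Q) \<le> card S + 2 * card Q"
    using card_Un_le[of S "\<Union>Q"] cU by linarith
  have eq: "S \<union> \<Union>(insert p Q) = insert a (insert b (S \<union> \<Union>Q))" using p by auto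
  have "card (edges (S \<union> \<Union>(insert p Q)) E) \<le> card (edges (S \<union> \<Union>Q) E) + 1 + card (S \<union> \<Union>Q)"
  proof -
    have fW: "finite (S \<union> \<Union>Q)" using insert.prems(5) fQ by simp
    show ?thesis unfolding eq
      by (rule edges_step[of "S \<union> \<Union>Q" E a b, OF fW insert.prems(1) insert.prems(2) p(2)])
  qed
  also have "\<dots> \<le> card Q * (card Q + card S) + 1 + (card S + 2 * card Q)"
    using IH cW by linarith
  also have "\<dots> = card (insert p Q) * (card (insert p Q) + card S)"
    using insert.hyps by (simp add: algebra_simps)
  finally show ?case .
qed


theorem claim7:
  fixes V :: "'a set" and E :: "'a \<Rightarrow> 'a \<Rightarrow> bool" and P :: "'a set list"
  assumes "simple_graph V E"
    and "triangle_free V E"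
    and "greedy_partition V E P"
  shows "card (edges V E) \<le> length P * (card V - length P)"
proof -
  have finV: "finite V" and sym0: "\<forall>u v. E u v \<longrightarrow> E v u" and irr0: "\<forall>v. \<not> E v v"
    and inV0: "\<forall>u v. E u v \<longrightarrow> u \<in> V \<and> v \<in> V"
    using assms(1) unfolding simple_graph_def by simp_all
  have sym: "\<And>u v. E u v \<Longrightarrow> E v u" using sym0 by blast
  have irr: "\<And>v. \<not> E v v" using irr0 by blast
  have inV: "\<And>u v. E u v \<Longrightarrow> u \<in> V \<and> v \<in> V" using inV0 by blast
  have gp: "good_partition V E P" using assms(3) unfolding greedy_partition_def by blast
  have greedy: "\<And>i. i < length P \<Longrightarrow> \<not> (\<exists>K \<subseteq> \<Union>(set (take (Suc i) P)).
                        card K = card (P!i) + 1 \<and> is_clique E K)"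
    using assms(3) unfolding greedy_partition_def by blast
  have ne: "\<And>C. C \<in> set P \<Longrightarrow> C \<noteq> {}" and cl: "\<And>C. C \<in> set P \<Longrightarrow> is_clique E C"
    and UV: "\<Union>(set P) = V"
    and dj: "\<And>i j. i < length P \<Longrightarrow> j < length P \<Longrightarrow> i \<noteq> j \<Longrightarrow> P!i \<inter> P!j = {}"
    using gp unfolding good_partition_def by blast+
  have tri: "\<And>x y z. E x y \<Longrightarrow> E y z \<Longrightarrow> \<not> E x z"
  proof
    fix x y z assume xy: "E x y" and yz: "E y z" and xz: "E x z"
    have d: "x \<noteq> y" "y \<noteq> z" "x \<noteq> z" using xy yz xz irr by auto
    have "{x,y,z} \<subseteq> V" using inV[OF xy] inV[OF yz] by blast
    moreover have "card {x,y,z} = 3" using d by simp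
    moreover have "is_clique E {x,y,z}" unfolding is_clique_def using xy yz xz sym[OF xy] sym[OF yz] sym[OF xz] by auto
    ultimately show False using assms(2) unfolding triangle_free_def by blast
  qed
  have dP: "\<And>C D. C \<in> set P \<Longrightarrow> D \<in> set P \<Longrightarrow> C \<noteq> D \<Longrightarrow> C \<inter> D = {}"
  proof -
    fix C D assume "C \<in> set P" "D \<in> set P" "C \<noteq> D"
    then obtain i j where "i < length P" "j < length P" "P!i = C" "P!j = D"
      by (auto simp: in_set_conv_nth)
    with dj \<open>C \<noteq> D\<close> show "C \<inter> D = {}" by blast
  qed
  have dist: "distinct P"
    unfolding distinct_conv_nth
  proof (intro allI impI)
    fix i j assume "i < length P" "j < length P" "i \<noteq> j"
    then have "P!i \<inter> P!j = {}" "P!i \<noteq> {}" using dj ne by auto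
    then show "P!i \<noteq> P!j" by auto
  qed
  have c12: "\<And>C. C \<in> set P \<Longrightarrow> card C = 1 \<or> card C = 2"
  proof -
    fix C assume C: "C \<in> set P"
    have fC: "finite C" using C UV finV by (meson Union_upper finite_subset)
    have "card C \<noteq> 0" using fC ne[OF C] by simp
    moreover have "\<not> card C \<ge> 3"
    proof
      assume "card C \<ge> 3"
      then obtain T where T: "T \<subseteq> C" "card T = 3" by (meson obtain_subset_with_card_n)
      have "T \<subseteq> V" using T(1) C UV by blast
      moreover have "is_clique E T" using cl[OF C] T(1) unfolding is_clique_def by blast
      ultimately show False using T(2) assms(2) unfolding triangle_free_def by blast
    qed
    ultimately show "card C = 1 \<or> card C = 2" by linarith
  qed
  define Q where "Q = {C\<in>set P. card C = 2}"
  define S1 where "S1 = {C\<in>set P. card C = 1}"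
  define S where "S = \<Union>S1"
  have finQ: "finite Q" and finS1: "finite S1" unfolding Q_def S1_def by auto
  have setP: "set P = S1 \<union> Q" using c12 unfolding Q_def S1_def by auto
  have lenP: "length P = card S1 + card Q"
  proof -
    have "length P = card (set P)" using dist by (simp add: distinct_card)
    also have "\<dots> = card S1 + card Q" unfolding setP
      by (rule card_Un_disjoint) (auto simp: finQ finS1 Q_def S1_def)
    finally show ?thesis .
  qed
  have finparts: "\<And>C. C \<in> set P \<Longrightarrow> finite C" using UV finV by (meson Union_upper finite_subset)
  have cS: "card S = card S1"
  proof -
    have "card S = sum card S1" unfolding S_def
      by (rule card_Union_disjoint) (auto simp: pairwise_def disjnt_def S1_def dP finparts)
    also have "\<dots> = sum (\<lambda>_. 1) S1" by (rule sum.cong) (auto simp: S1_def)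
    finally show ?thesis by simp
  qed
  have cUQ: "card (\<Union>Q) = 2 * card Q"
  proof -
    have "card (\<Union>Q) = sum card Q"
      by (rule card_Union_disjoint) (auto simp: pairwise_def disjnt_def Q_def dP finparts)
    also have "\<dots> = sum (\<lambda>_. 2) Q" by (rule sum.cong) (auto simp: Q_def)
    finally show ?thesis by simp
  qed
  have SQ: "S \<inter> \<Union>Q = {}"
  proof -
    have "\<And>C D. C \<in> S1 \<Longrightarrow> D \<in> Q \<Longrightarrow> C \<inter> D = {}"
    proof -
      fix C D assume "C \<in> S1" "D \<in> Q"
      then have "C \<in> set P" "D \<in> set P" "C \<noteq> D" unfolding S1_def Q_def by auto
      then show "C \<inter> D = {}" by (rule dP)
    qed
    then show ?thesis unfolding S_def by blast
  qed
  have VSQ: "V = S \<union> \<Union>Q" using UV setP unfolding S_def by auto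
  have cV: "card V = card S1 + 2 * card Q"
  proof -
    have fs: "finite S" "finite (\<Union>Q)" using finV VSQ by simp_all
    have "card V = card S + card (\<Union>Q)" unfolding VSQ using card_Un_disjoint[OF fs SQ] .
    then show ?thesis using cS cUQ by simp
  qed
  have indep: "\<forall>u\<in>S. \<forall>v\<in>S. \<not> E u v"
  proof (intro ballI notI)
    fix u v assume u: "u \<in> S" and v: "v \<in> S" and e: "E u v"
    obtain C where C: "C \<in> S1" "u \<in> C" using u unfolding S_def by blast
    obtain D where D: "D \<in> S1" "v \<in> D" using v unfolding S_def by blast
    obtain j where j: "j < length P" "P!j = C" using C(1) unfolding S1_def by (auto simp: in_set_conv_nth)
    obtain k where k: "k < length P" "P!k = D" using D(1) unfolding S1_def by (auto simp: in_set_conv_nth)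
    define i where "i = max j k"
    have i: "i < length P" using j k unfolding i_def by simp
    have ci: "card (P!i) = 1" using C D j k unfolding i_def S1_def by (cases "j \<le> k") auto
    have tj: "C \<in> set (take (Suc i) P)"
    proof -
      have "j < length (take (Suc i) P)" using j i unfolding i_def by simp
      moreover have "take (Suc i) P ! j = C" using j unfolding i_def by simp
      ultimately show ?thesis by (metis nth_mem)
    qed
    have tk: "D \<in> set (take (Suc i) P)"
    proof -
      have "k < length (take (Suc i) P)" using k i unfolding i_def by simp
      moreover have "take (Suc i) P ! k = D" using k unfolding i_def by simp
      ultimately show ?thesis by (metis nth_mem)
    qed
    have uv: "u \<noteq> v"
    proof assume "u = v" with e irr show False by simp qed
    have "{u,v} \<subseteq> \<Union>(set (take (Suc i) P))" using tj tk C D by blast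
    moreover have "card {u,v} = card (P!i) + 1" using ci uv by simp
    moreover have "is_clique E {u,v}" unfolding is_clique_def using e sym[OF e] by auto
    ultimately show False using greedy[OF i] by blast
  qed
  have Qe: "\<forall>p\<in>Q. \<exists>a b. p = {a,b} \<and> E a b"
  proof
    fix p assume p: "p \<in> Q"
    then obtain a b where ab: "p = {a,b}" "a \<noteq> b" unfolding Q_def by (auto simp: card_2_iff)
    have "E a b" using cl p ab unfolding Q_def is_clique_def by blast
    then show "\<exists>a b. p = {a,b} \<and> E a b" using ab by blast
  qed
  have Qd: "\<forall>p\<in>Q. \<forall>q\<in>Q. p \<noteq> q \<longrightarrow> p \<inter> q = {}" using dP unfolding Q_def by blast
  have finS: "finite S" using finV VSQ by simp
  have "card (edges (S \<union> \<Union>Q) E) \<le> card Q * (card Q + card S)"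
    by (rule main_count[OF finQ sym tri Qe Qd finS SQ indep])
  moreover have "length P * (card V - length P) = card Q * (card Q + card S)"
    using lenP cV cS by simp
  ultimately show ?thesis using VSQ by simp
qed

end
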